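(* For every integer $n\geq 3$, $$\gamma_t(C_n\times C_3)=\left\lceil \frac{4n}{5}\right\rceil$$ and $$\gamma_p(C_n\times C_3)=\begin{cases}\left\lceil\frac{4n}{5}\right\rceil, & \text{if } n\equiv 0,2,4 \pmod 5,\\[2pt] \left\lceil\frac{4n}{5}\right\rceil+1, & \text{if } n\equiv 1,3 \pmod 5.\end{cases}$$
   Context: All graphs are finite, simple and undirected. $C_n$ denotes the cycle of order $n$ and $G\times H$ the Cartesian product of graphs. For a graph $G$ without isolated vertices: a set $D\subseteq V(G)$ is a total dominating set if every vertex of $G$ (including those in $D$) has a neighbour in $D$; $\gamma_t(G)$ is the minimum size of a total dominating set. A set $D\subseteq V(G)$ is a paired dominating set if every vertex outside $D$ has a neighbour in $D$ and the induced subgraph $G[D]$ has a perfect matching; $\gamma_p(G)$ is the minimum size of a paired dominating set. *)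

theory Defs
  imports Complex_Main
begin

text \<open>Generic simple graphs: a finite vertex set V with a symmetric irreflexive
  adjacency relation E (only its restriction to V matters).\<close>

definition total_dominating :: "'a set \<Rightarrow> ('a \<Rightarrow> 'a \<Rightarrow> bool) \<Rightarrow> 'a set \<Rightarrow> bool" where
  "total_dominating V E D \<longleftrightarrow> D \<subseteq> V \<and> (\<forall>v\<in>V. \<exists>u\<in>D. E v u)"

definition total_domination_number :: "'a set \<Rightarrow> ('a \<Rightarrow> 'a \<Rightarrow> bool) \<Rightarrow> nat" where
  "total_domination_number V E = Min (card ` {D. total_dominating V E D})"

definition perfect_matching_induced ::
  "('a \<Rightarrow> 'a \<Rightarrow> bool) \<Rightarrow> 'a set \<Rightarrow> 'a set set \<Rightarrow> bool" where
  "perfect_matching_induced E D M \<longleftrightarrow>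
     (\<forall>e\<in>M. \<exists>u v. e = {u, v} \<and> u \<in> D \<and> v \<in> D \<and> u \<noteq> v \<and> E u v) \<and>
     (\<forall>e1\<in>M. \<forall>e2\<in>M. e1 \<noteq> e2 \<longrightarrow> e1 \<inter> e2 = {}) \<and>
     (\<forall>v\<in>D. \<exists>e\<in>M. v \<in> e)"

definition paired_dominating :: "'a set \<Rightarrow> ('a \<Rightarrow> 'a \<Rightarrow> bool) \<Rightarrow> 'a set \<Rightarrow> bool" where
  "paired_dominating V E D \<longleftrightarrow> D \<subseteq> V \<and> (\<forall>v\<in>V - D. \<exists>u\<in>D. E v u) \<and>
     (\<exists>M. perfect_matching_induced E D M)"

definition paired_domination_number :: "'a set \<Rightarrow> ('a \<Rightarrow> 'a \<Rightarrow> bool) \<Rightarrow> nat" where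
  "paired_domination_number V E = Min (card ` {D. paired_dominating V E D})"

definition cycle_adj :: "nat \<Rightarrow> nat \<Rightarrow> nat \<Rightarrow> bool" where
  "cycle_adj n i j \<longleftrightarrow> i < n \<and> j < n \<and> ((i + 1) mod n = j \<or> (j + 1) mod n = i)"

definition cart_adj :: "('a \<Rightarrow> 'a \<Rightarrow> bool) \<Rightarrow> ('b \<Rightarrow> 'b \<Rightarrow> bool) \<Rightarrow> 'a \<times> 'b \<Rightarrow> 'a \<times> 'b \<Rightarrow> bool" where
  "cart_adj E1 E2 x y \<longleftrightarrow>
     (fst x = fst y \<and> E2 (snd x) (snd y)) \<or> (snd x = snd y \<and> E1 (fst x) (fst y))"

abbreviation CnC3_vertices :: "nat \<Rightarrow> (nat \<times> nat) set" where
  "CnC3_vertices n \<equiv> {0..<n} \<times> {0..<3}"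

abbreviation CnC3_adj :: "nat \<Rightarrow> nat \<times> nat \<Rightarrow> nat \<times> nat \<Rightarrow> bool" where
  "CnC3_adj n \<equiv> cart_adj (cycle_adj n) (cycle_adj 3)"

end

theory Submission
  imports Defs
begin


definition locs :: "nat set \<Rightarrow> nat set \<Rightarrow> nat set \<Rightarrow> bool" where
"locs a b c \<longleftrightarrow> ((1\<in>b \<or> 2\<in>b \<or> 0\<in>a \<or> 0\<in>c) \<and> (0\<in>b \<or> 2\<in>b \<or> 1\<in>a \<or> 1\<in>c) \<and> (0\<in>b \<or> 1\<in>b \<or> 2\<in>a \<or> 2\<in>c))"

lemma three_cases: "(j::nat) < 3 \<longleftrightarrow> j = 0 \<or> j = 1 \<or> j = 2" by auto

lemma all3: "(\<forall>j<(3::nat). P j) \<longleftrightarrow> P 0 \<and> P 1 \<and> P 2"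
  by (auto simp: numeral_3_eq_3 numeral_2_eq_2 less_Suc_eq)
lemma ex3: "(\<exists>j<(3::nat). P j) \<longleftrightarrow> P 0 \<or> P 1 \<or> P 2"
  by (auto simp: numeral_3_eq_3 numeral_2_eq_2 less_Suc_eq)

lemma locs_iff: "locs a b c \<longleftrightarrow> (\<forall>j<3. (\<exists>j'<3. j' \<noteq> j \<and> j' \<in> b) \<or> j \<in> a \<or> j \<in> c)"
  unfolding locs_def all3 ex3 by auto

definition ca :: "nat set \<Rightarrow> int" where
"ca a = of_bool (0\<in>a) + of_bool (1\<in>a) + of_bool (2\<in>a)"

definition cB :: "bool \<Rightarrow> bool \<Rightarrow> bool \<Rightarrow> int" where
"cB x y z = (if x then 1 else 0) + (if y then 1 else 0) + (if z then 1 else 0)"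

definition PB :: "bool \<Rightarrow> bool \<Rightarrow> bool \<Rightarrow> bool \<Rightarrow> bool \<Rightarrow> bool \<Rightarrow> int" where
"PB a0 a1 a2 b0 b1 b2 = (if cB a0 a1 a2 \<ge> 2 then 0 else if cB a0 a1 a2 = 1 then 2 + (if (a0 \<and> b0) \<or> (a1 \<and> b1) \<or> (a2 \<and> b2) then 1 else 0)
   else 4 + 2 * max 0 (cB b0 b1 b2 - 1))"

lemma keyB: "(b1 \<or> b2 \<or> a0 \<or> c0) \<and> (b0 \<or> b2 \<or> a1 \<or> c1) \<and> (b0 \<or> b1 \<or> a2 \<or> c2) \<Longrightarrow>
  4 + PB a0 a1 a2 b0 b1 b2 - PB b0 b1 b2 c0 c1 c2 \<le> 5 * cB b0 b1 b2"
  by (cases a0; cases a1; cases a2; cases b0; cases b1; cases b2; cases c0; cases c1; cases c2; simp add: PB_def cB_def)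

definition P :: "nat set \<Rightarrow> nat set \<Rightarrow> int" where
"P a b = PB (0\<in>a) (1\<in>a) (2\<in>a) (0\<in>b) (1\<in>b) (2\<in>b)"

lemma key: "locs a b c \<Longrightarrow> 4 + P a b - P b c \<le> 5 * cB (0\<in>b) (1\<in>b) (2\<in>b)"
  unfolding locs_def P_def by (rule keyB)

lemma card_ca: fixes b :: "nat set" assumes h: "b \<subseteq> {0,1,2}" shows "int (card b) = cB (0\<in>b) (1\<in>b) (2\<in>b)"
proof -
  have "b = {j. j = 0 \<and> 0 \<in> b} \<union> {j. j = 1 \<and> 1 \<in> b} \<union> {j. j = 2 \<and> 2 \<in> b}" using h by auto
  moreover have "card ({j. j = 0 \<and> 0 \<in> b} \<union> {j. j = 1 \<and> 1 \<in> b} \<union> {j::nat. j = 2 \<and> 2 \<in> b}) = nat (cB (0\<in>b) (1\<in>b) (2\<in>b))"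
    unfolding cB_def by (cases "0\<in>b"; cases "1\<in>b"; cases "2\<in>b"; simp)
  moreover have "cB (0\<in>b) (1\<in>b) (2\<in>b) \<ge> 0" unfolding cB_def by simp
  ultimately show ?thesis by simp
qed



definition prv :: "nat \<Rightarrow> nat \<Rightarrow> nat" where "prv n i = (i + n - 1) mod n"
definition nxt :: "nat \<Rightarrow> nat \<Rightarrow> nat" where "nxt n i = Suc i mod n"

lemma nxt_lt: "0 < n \<Longrightarrow> nxt n i < n" by (simp add: nxt_def)
lemma prv_lt: "0 < n \<Longrightarrow> prv n i < n" by (simp add: prv_def)

lemma nxt_prv: assumes "i < n" shows "nxt n (prv n i) = i"
proof -
  have "nxt n (prv n i) = Suc (i + n - 1) mod n" by (simp add: nxt_def prv_def mod_Suc_eq)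
  also have "Suc (i + n - 1) = i + n" using assms by simp
  finally show ?thesis using assms by simp
qed

lemma prv_nxt: assumes "i < n" shows "prv n (nxt n i) = i"
proof -
  have "prv n (nxt n i) = (Suc i mod n + (n - 1)) mod n" using assms by (simp add: nxt_def prv_def)
  also have "\<dots> = (Suc i + (n - 1)) mod n" by (simp add: mod_add_left_eq)
  also have "Suc i + (n - 1) = i + n" using assms by simp
  finally show ?thesis using assms by simp
qed

lemma cyc_iff: assumes "i < n" "a < n" shows "cycle_adj n i a \<longleftrightarrow> (a = nxt n i \<or> a = prv n i)"
proof -
  have "(a + 1) mod n = i \<longleftrightarrow> a = prv n i"
    using prv_nxt[OF assms(2)] nxt_prv[OF assms(1)] by (auto simp: nxt_def)
  then show ?thesis using assms unfolding cycle_adj_def by (auto simp: nxt_def)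
qed

lemma cyc3: "j < 3 \<Longrightarrow> b < 3 \<Longrightarrow> cycle_adj 3 j b \<longleftrightarrow> j \<noteq> b"
  unfolding cycle_adj_def three_cases by auto

lemma tdom_loc:
  assumes n: "n \<ge> 3" and td: "total_dominating (CnC3_vertices n) (CnC3_adj n) D" and i: "i < n"
  shows "locs {j. (prv n i, j) \<in> D} {j. (i, j) \<in> D} {j. (nxt n i, j) \<in> D}"
  unfolding locs_iff
proof (intro allI impI)
  fix j :: nat assume j: "j < 3"
  have DV: "D \<subseteq> CnC3_vertices n" and dom: "\<forall>v\<in>CnC3_vertices n. \<exists>u\<in>D. CnC3_adj n v u"
    using td unfolding total_dominating_def by auto
  from dom i j obtain a b where ab: "(a, b) \<in> D" and adj: "CnC3_adj n (i, j) (a, b)" by fastforce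
  from ab DV have a: "a < n" and b: "b < 3" by auto
  from adj consider "i = a \<and> cycle_adj 3 j b" | "j = b \<and> cycle_adj n i a" unfolding cart_adj_def by auto
  then show "(\<exists>j'<3. j' \<noteq> j \<and> j' \<in> {j. (i, j) \<in> D}) \<or> j \<in> {j. (prv n i, j) \<in> D} \<or> j \<in> {j. (nxt n i, j) \<in> D}"
  proof cases
    case 1 then show ?thesis using cyc3[OF j b] ab b by auto
  next
    case 2 then show ?thesis using cyc_iff[OF i a] ab by auto
  qed
qed

lemma bij_nxt: "0 < n \<Longrightarrow> bij_betw (nxt n) {..<n} {..<n}"
  unfolding bij_betw_def
proof
  assume n: "0 < n"
  show "inj_on (nxt n) {..<n}" by (rule inj_on_inverseI[where g="prv n"]) (simp add: prv_nxt)
  show "nxt n ` {..<n} = {..<n}"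
  proof
    show "nxt n ` {..<n} \<subseteq> {..<n}" using nxt_lt[OF n] by auto
    show "{..<n} \<subseteq> nxt n ` {..<n}"
    proof
      fix i assume "i \<in> {..<n}"
      then have "i = nxt n (prv n i)" "prv n i \<in> {..<n}" using nxt_prv prv_lt[OF n] by auto
      then show "i \<in> nxt n ` {..<n}" by blast
    qed
  qed
qed

lemma lower:
  assumes n: "n \<ge> 3" and td: "total_dominating (CnC3_vertices n) (CnC3_adj n) D"
  shows "4 * n \<le> 5 * card D"
proof -
  define S where "S i = {j. (i, j) \<in> D}" for i
  have DV: "D \<subseteq> CnC3_vertices n" using td unfolding total_dominating_def by auto
  have Ssub: "S i \<subseteq> {0,1,2}" for i using DV unfolding S_def by auto
  have finS: "finite (S i)" for i using Ssub[of i] finite_subset by blast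
  have Dsig: "D = Sigma {..<n} S" using DV unfolding S_def by auto
  have cardD: "card D = (\<Sum>i<n. card (S i))"
  proof -
    have "card D = card (Sigma {..<n} S)" using Dsig by simp
    also have "\<dots> = (\<Sum>i<n. card (S i))" by (rule card_SigmaI) (auto simp: finS)
    finally show ?thesis .
  qed
  define Q where "Q i = P (S (prv n i)) (S i)" for i
  have each: "4 + Q i - Q (nxt n i) \<le> 5 * int (card (S i))" if i: "i < n" for i
  proof -
    have "locs (S (prv n i)) (S i) (S (nxt n i))" using tdom_loc[OF n td i] unfolding S_def .
    from key[OF this] have "4 + P (S (prv n i)) (S i) - P (S i) (S (nxt n i)) \<le> 5 * int (card (S i))"
      using card_ca[OF Ssub[of i]] by simp
    then show ?thesis unfolding Q_def using prv_nxt[OF i] by simp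
  qed
  have "(\<Sum>i<n. (4 + Q i - Q (nxt n i))) \<le> (\<Sum>i<n. 5 * int (card (S i)))"
    by (intro sum_mono each) simp
  moreover have "(\<Sum>i<n. (4 + Q i - Q (nxt n i))) = 4 * int n + (\<Sum>i<n. Q i) - (\<Sum>i<n. Q (nxt n i))"
    by (simp add: sum.distrib sum_subtractf)
  moreover have "(\<Sum>i<n. Q (nxt n i)) = (\<Sum>i<n. Q i)"
    by (rule sum.reindex_bij_betw[OF bij_nxt]) (use n in simp)
  moreover have "(\<Sum>i<n. 5 * int (card (S i))) = 5 * int (card D)"
    unfolding cardD by (simp add: sum_distrib_left)
  ultimately have "4 * int n \<le> 5 * int (card D)" by linarith
  then show ?thesis by linarith
qed



datatype col = E | V01 | V02 | V12 | R2 | L2 | S2 | T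

fun colset :: "col \<Rightarrow> nat set" where
  "colset E = {}" | "colset V01 = {0,1}" | "colset V02 = {0,2}" | "colset V12 = {1,2}"
| "colset R2 = {2}" | "colset L2 = {2}" | "colset S2 = {2}" | "colset T = {0,1,2}"

lemma colset_sub: "colset c \<subseteq> {0,1,2}" by (cases c) auto

definition Qt :: "col \<Rightarrow> col \<Rightarrow> col \<Rightarrow> bool" where
  "Qt x y z \<longleftrightarrow> locs (colset x) (colset y) (colset z)"

definition Qp :: "col \<Rightarrow> col \<Rightarrow> col \<Rightarrow> bool" where
  "Qp x y z \<longleftrightarrow> Qt x y z \<and> (y = R2 \<longrightarrow> z = L2) \<and> (y = L2 \<longrightarrow> x = R2) \<and> y \<noteq> S2 \<and> y \<noteq> T"

definition valid :: "(col \<Rightarrow> col \<Rightarrow> col \<Rightarrow> bool) \<Rightarrow> col list \<Rightarrow> bool" where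
  "valid Q L \<longleftrightarrow> (\<forall>i<length L. Q (L ! prv (length L) i) (L ! i) (L ! nxt (length L) i))"

lemma valid_code [code]: "valid Q L = list_all (\<lambda>i. Q (L ! prv (length L) i) (L ! i) (L ! nxt (length L) i)) [0..<length L]"
  unfolding valid_def list_all_iff by auto

definition cnt :: "col list \<Rightarrow> nat" where "cnt L = sum_list (map (\<lambda>c. card (colset c)) L)"

lemma prv_eq: "i < n \<Longrightarrow> prv n i = (if i = 0 then n - 1 else i - 1)"
  unfolding prv_def by (cases i) (auto simp: mod_if)

lemma nxt_eq: "i < n \<Longrightarrow> nxt n i = (if i = n - 1 then 0 else i + 1)"
  unfolding nxt_def by (auto simp: mod_if)

lemma valid_insert:
  assumes B5: "length B = 5" and vB: "valid Q B" and vL: "valid Q (B @ R)"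
  shows "valid Q (B @ B @ R)"
  unfolding valid_def
proof (intro allI impI)
  fix i assume i: "i < length (B @ B @ R)"
  define L where "L = B @ R"
  define m where "m = length L"
  have m5: "m \<ge> 5" unfolding m_def L_def using B5 by simp
  have len: "length (B @ B @ R) = m + 5" unfolding m_def L_def using B5 by simp
  have BBR: "B @ B @ R = B @ L" unfolding L_def by simp
  have nthBL: "(B @ L) ! k = (if k < 5 then B ! k else L ! (k - 5))" for k
    using B5 by (simp add: nth_append)
  have nthL: "k < 5 \<Longrightarrow> L ! k = B ! k" for k unfolding L_def using B5 by (simp add: nth_append)
  have vL': "Q (L ! prv m k) (L ! k) (L ! nxt m k)" if "k < m" for k
    using vL that unfolding valid_def L_def m_def by auto
  have vB': "Q (B ! prv 5 k) (B ! k) (B ! nxt 5 k)" if "k < 5" for k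
    using vB that B5 unfolding valid_def by auto
  from i len have i': "i < m + 5" by simp
  consider "i = 0" | "1 \<le> i \<and> i \<le> 3" | "i = 4" | "i = 5" | "6 \<le> i" by linarith
  then show "Q ((B @ B @ R) ! prv (length (B @ B @ R)) i) ((B @ B @ R) ! i) ((B @ B @ R) ! nxt (length (B @ B @ R)) i)"
  proof cases
    case 1
    have "Q (L ! prv m 0) (L ! 0) (L ! nxt m 0)" using vL' m5 by simp
    then show ?thesis unfolding len unfolding BBR using 1 m5 by (simp add: prv_eq nxt_eq nthBL nthL)
  next
    case 2
    have "Q (B ! prv 5 i) (B ! i) (B ! nxt 5 i)" using vB' 2 by simp
    then show ?thesis unfolding len unfolding BBR using 2 m5 by (auto simp: prv_eq nxt_eq nthBL)
  next
    case 3
    have "Q (B ! prv 5 4) (B ! 4) (B ! nxt 5 4)" using vB' by simp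
    then show ?thesis unfolding len unfolding BBR using 3 m5 by (simp add: prv_eq nxt_eq nthBL nthL)
  next
    case 4
    have "Q (B ! prv 5 0) (B ! 0) (B ! nxt 5 0)" using vB' by simp
    then show ?thesis unfolding len unfolding BBR using 4 m5 by (simp add: prv_eq nxt_eq nthBL nthL)
  next
    case 5
    have k: "i - 5 < m" using i' 5 by simp
    have "Q (L ! prv m (i - 5)) (L ! (i - 5)) (L ! nxt m (i - 5))" using vL'[OF k] .
    moreover have "prv m (i - 5) = i - 6" using 5 k by (simp add: prv_eq)
    moreover have "prv (m + 5) i = i - 1" using 5 i' by (simp add: prv_eq)
    moreover have "(B @ L) ! nxt (m + 5) i = L ! nxt m (i - 5)"
    proof (cases "i = m + 4")
      case True then show ?thesis using k m5 by (simp add: nxt_eq nthBL nthL)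
    next
      case False
      then have "nxt (m + 5) i = i + 1" "nxt m (i - 5) = i - 4" using i' 5 k by (auto simp: nxt_eq)
      then show ?thesis using 5 by (simp add: nthBL)
    qed
    moreover have "(B @ L) ! (i - 1) = L ! (i - 6)" "(B @ L) ! i = L ! (i - 5)"
      using 5 by (auto simp: nthBL)
    ultimately show ?thesis unfolding len unfolding BBR
      by metis
  qed
qed

lemma cnt_append: "cnt (A @ B) = cnt A + cnt B" unfolding cnt_def by simp



definition tp :: "nat \<Rightarrow> nat" where
  "tp n = (if n mod 5 \<in> {0, 2, 4} then (4 * n + 4) div 5 else (4 * n + 4) div 5 + 1)"

definition Bt :: "col list" where "Bt = [E,V01,E,S2,S2]"
definition Bp :: "col list" where "Bp = [E,V01,E,R2,L2]"

lemma ex_tot: "n \<ge> 5 \<Longrightarrow> \<exists>R. length (Bt @ R) = n \<and> valid Qt (Bt @ R) \<and> cnt (Bt @ R) = (4 * n + 4) div 5"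
proof (induction n rule: less_induct)
  case (less n)
  show ?case
  proof (cases "n < 10")
    case True
    with less.prems have "n = 5 \<or> n = 6 \<or> n = 7 \<or> n = 8 \<or> n = 9" by linarith
    then show ?thesis
    proof (elim disjE)
      assume "n = 5" then show ?thesis by (intro exI[of _ "[]"]) (simp add: Bt_def, code_simp)
    next
      assume "n = 6" then show ?thesis by (intro exI[of _ "[S2]"]) (simp add: Bt_def, code_simp)
    next
      assume "n = 7" then show ?thesis by (intro exI[of _ "[S2,S2]"]) (simp add: Bt_def, code_simp)
    next
      assume "n = 8" then show ?thesis by (intro exI[of _ "[S2,S2,S2]"]) (simp add: Bt_def, code_simp)
    next
      assume "n = 9" then show ?thesis by (intro exI[of _ "[S2,S2,S2,S2]"]) (simp add: Bt_def, code_simp)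
    qed
  next
    case False
    have ex: "\<exists>R. length (Bt @ R) = n - 5 \<and> valid Qt (Bt @ R) \<and> cnt (Bt @ R) = (4 * (n - 5) + 4) div 5"
      by (rule less.IH) (use False in auto)
    then obtain R where R: "length (Bt @ R) = n - 5" "valid Qt (Bt @ R)" "cnt (Bt @ R) = (4 * (n - 5) + 4) div 5"
      by blast
    have v: "valid Qt (Bt @ Bt @ R)"
      by (rule valid_insert[OF _ _ R(2)]) (simp add: Bt_def, code_simp)
    have c: "cnt Bt = 4" by (simp add: Bt_def, code_simp)
    have c2: "cnt (Bt @ Bt @ R) = 4 + cnt (Bt @ R)" using c by (simp add: cnt_append)
    have ar: "(4 * n + 4) div 5 = 4 + (4 * (n - 5) + 4) div 5" using False by presburger
    have l: "length (Bt @ Bt @ R) = n" using R(1) False by (simp add: Bt_def)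
    show ?thesis
      by (intro exI[of _ "Bt @ R"]) (use R v c2 ar l in simp)
  qed
qed

lemma tp_step: "n \<ge> 10 \<Longrightarrow> tp n = 4 + tp (n - 5)"
proof -
  assume n: "n \<ge> 10"
  have e: "n = (n - 5) + 5" using n by simp
  have m: "(n - 5) mod 5 = n mod 5" by (subst e) simp
  have e2: "4 * n + 4 = (4 * (n - 5) + 4) + 4 * 5" using n by simp
  have ar: "(4 * n + 4) div 5 = 4 + (4 * (n - 5) + 4) div 5" unfolding e2 by simp
  show ?thesis unfolding tp_def m ar by simp
qed
lemma ex_pair: "n \<ge> 5 \<Longrightarrow> \<exists>R. length (Bp @ R) = n \<and> valid Qp (Bp @ R) \<and> cnt (Bp @ R) = tp n"
proof (induction n rule: less_induct)
  case (less n)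
  show ?case
  proof (cases "n < 10")
    case True
    with less.prems have "n = 5 \<or> n = 6 \<or> n = 7 \<or> n = 8 \<or> n = 9" by linarith
    then show ?thesis
    proof (elim disjE)
      assume "n = 5" then show ?thesis by (intro exI[of _ "[]"]) (simp add: Bp_def, code_simp)
    next
      assume "n = 6" then show ?thesis by (intro exI[of _ "[V02]"]) (simp add: Bp_def, code_simp)
    next
      assume "n = 7" then show ?thesis by (intro exI[of _ "[R2,L2]"]) (simp add: Bp_def, code_simp)
    next
      assume "n = 8" then show ?thesis by (intro exI[of _ "[E,V01,V02]"]) (simp add: Bp_def, code_simp)
    next
      assume "n = 9" then show ?thesis by (intro exI[of _ "[E,V01,E,V02]"]) (simp add: Bp_def, code_simp)
    qed
  next
    case False
    have ex: "\<exists>R. length (Bp @ R) = n - 5 \<and> valid Qp (Bp @ R) \<and> cnt (Bp @ R) = tp (n - 5)"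
      by (rule less.IH) (use False in auto)
    then obtain R where R: "length (Bp @ R) = n - 5" "valid Qp (Bp @ R)" "cnt (Bp @ R) = tp (n - 5)"
      by blast
    have v: "valid Qp (Bp @ Bp @ R)"
      by (rule valid_insert[OF _ _ R(2)]) (simp add: Bp_def, code_simp)
    have c: "cnt Bp = 4" by (simp add: Bp_def, code_simp)
    have c2: "cnt (Bp @ Bp @ R) = 4 + cnt (Bp @ R)" using c by (simp add: cnt_append)
    have ar: "tp n = 4 + tp (n - 5)" using False by (simp add: tp_step)
    have l: "length (Bp @ Bp @ R) = n" using R(1) False by (simp add: Bp_def)
    show ?thesis
      by (intro exI[of _ "Bp @ R"]) (use R v c2 ar l in simp)
  qed
qed

lemma ex_tot_all: "n \<ge> 3 \<Longrightarrow> \<exists>L. length L = n \<and> valid Qt L \<and> cnt L = (4 * n + 4) div 5"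
proof -
  assume n: "n \<ge> 3"
  consider "n = 3" | "n = 4" | "n \<ge> 5" using n by linarith
  then show ?thesis
  proof cases
    case 1 then show ?thesis by (intro exI[of _ "[E,E,T]"]) (simp, code_simp)
  next
    case 2 then show ?thesis by (intro exI[of _ "[E,V01,E,V02]"]) (simp, code_simp)
  next
    case 3 then show ?thesis using ex_tot by blast
  qed
qed

lemma ex_pair_all: "n \<ge> 3 \<Longrightarrow> \<exists>L. length L = n \<and> valid Qp L \<and> cnt L = tp n"
proof -
  assume n: "n \<ge> 3"
  consider "n = 3" | "n = 4" | "n \<ge> 5" using n by linarith
  then show ?thesis
  proof cases
    case 1 then show ?thesis by (intro exI[of _ "[E,V01,V02]"]) (simp add: tp_def, code_simp)
  next
    case 2 then show ?thesis by (intro exI[of _ "[E,V01,E,V02]"]) (simp add: tp_def, code_simp)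
  next
    case 3 then show ?thesis using ex_pair by blast
  qed
qed



definition setL :: "col list \<Rightarrow> (nat \<times> nat) set" where
  "setL L = Sigma {..<length L} (\<lambda>i. colset (L ! i))"

lemma fin_colset: "finite (colset c)" by (cases c) auto

lemma card_setL: "card (setL L) = cnt L"
proof -
  have "card (setL L) = (\<Sum>i<length L. card (colset (L ! i)))"
    unfolding setL_def by (rule card_SigmaI) (auto simp: fin_colset)
  also have "\<dots> = cnt L" unfolding cnt_def sum_list_sum_nth by (simp add: atLeast0LessThan)
  finally show ?thesis .
qed

lemma setL_sub: "setL L \<subseteq> CnC3_vertices (length L)"
  unfolding setL_def using colset_sub by fastforce

lemma nxt_ne: "2 \<le> n \<Longrightarrow> i < n \<Longrightarrow> nxt n i \<noteq> i" by (auto simp: nxt_eq)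
lemma prv_ne: "2 \<le> n \<Longrightarrow> i < n \<Longrightarrow> prv n i \<noteq> i" by (auto simp: prv_eq)

lemma tot_from_list:
  assumes n: "n \<ge> 3" and len: "length L = n" and v: "valid Qt L"
  shows "total_dominating (CnC3_vertices n) (CnC3_adj n) (setL L)"
  unfolding total_dominating_def
proof (intro conjI ballI)
  show "setL L \<subseteq> CnC3_vertices n" using setL_sub[of L] len by simp
  fix x assume x: "x \<in> CnC3_vertices n"
  then obtain i j where ij: "x = (i, j)" "i < n" "j < 3" by auto
  have n0: "0 < n" using n by simp
  have "locs (colset (L ! prv n i)) (colset (L ! i)) (colset (L ! nxt n i))"
    using v ij len unfolding valid_def Qt_def by auto
  then have "(\<exists>j'<3. j' \<noteq> j \<and> j' \<in> colset (L ! i)) \<or> j \<in> colset (L ! prv n i) \<or> j \<in> colset (L ! nxt n i)"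
    unfolding locs_iff using ij by auto
  then show "\<exists>u\<in>setL L. CnC3_adj n x u"
  proof (elim disjE exE conjE)
    fix j' assume a: "j' < 3" "j' \<noteq> j" "j' \<in> colset (L ! i)"
    have "(i, j') \<in> setL L" using a ij len unfolding setL_def by auto
    moreover have "CnC3_adj n x (i, j')" using cyc3[OF ij(3) a(1)] a ij unfolding cart_adj_def by auto
    ultimately show ?thesis by blast
  next
    assume a: "j \<in> colset (L ! prv n i)"
    have "(prv n i, j) \<in> setL L" using a prv_lt[OF n0] len unfolding setL_def by auto
    moreover have "CnC3_adj n x (prv n i, j)" using cyc_iff[OF ij(2) prv_lt[OF n0]] ij unfolding cart_adj_def by auto
    ultimately show ?thesis by blast
  next
    assume a: "j \<in> colset (L ! nxt n i)"
    have "(nxt n i, j) \<in> setL L" using a nxt_lt[OF n0] len unfolding setL_def by auto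
    moreover have "CnC3_adj n x (nxt n i, j)" using cyc_iff[OF ij(2) nxt_lt[OF n0]] ij unfolding cart_adj_def by auto
    ultimately show ?thesis by blast
  qed
qed

lemma Qp_Qt: "valid Qp L \<Longrightarrow> valid Qt L" unfolding valid_def Qp_def by auto

lemma pm_partner:
  assumes h: "\<forall>v\<in>D. p v \<in> D \<and> p v \<noteq> v \<and> G v (p v) \<and> p (p v) = v"
  shows "perfect_matching_induced G D ((\<lambda>v. {v, p v}) ` D)"
  unfolding perfect_matching_induced_def
proof (intro conjI ballI impI)
  fix e assume "e \<in> (\<lambda>v. {v, p v}) ` D"
  then obtain v where "v \<in> D" "e = {v, p v}" by auto
  then show "\<exists>u v. e = {u, v} \<and> u \<in> D \<and> v \<in> D \<and> u \<noteq> v \<and> G u v" using h by metis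
next
  fix e1 e2 assume e1: "e1 \<in> (\<lambda>v. {v, p v}) ` D" and e2: "e2 \<in> (\<lambda>v. {v, p v}) ` D" and ne: "e1 \<noteq> e2"
  from e1 obtain v where v: "v \<in> D" "e1 = {v, p v}" by auto
  from e2 obtain w where w: "w \<in> D" "e2 = {w, p w}" by auto
  show "e1 \<inter> e2 = {}"
  proof (rule ccontr)
    assume "e1 \<inter> e2 \<noteq> {}"
    then have "v = w \<or> v = p w \<or> p v = w \<or> p v = p w" using v w by auto
    then have "e1 = e2" using v w h by (metis insert_commute)
    with ne show False by simp
  qed
next
  fix v assume "v \<in> D" then show "\<exists>e\<in>(\<lambda>v. {v, p v}) ` D. v \<in> e" by blast
qed



lemma cyc_sym: "cycle_adj n a b \<Longrightarrow> cycle_adj n b a" unfolding cycle_adj_def by blast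

lemma adj_sym: "CnC3_adj n x y \<Longrightarrow> CnC3_adj n y x"
  unfolding cart_adj_def using cyc_sym by metis

lemma pair_from_list:
  assumes n: "n \<ge> 3" and len: "length L = n" and v: "valid Qp L"
  shows "paired_dominating (CnC3_vertices n) (CnC3_adj n) (setL L)"
proof -
  have td: "total_dominating (CnC3_vertices n) (CnC3_adj n) (setL L)"
    using tot_from_list[OF n len Qp_Qt[OF v]] .
  have n0: "0 < n" and n2: "2 \<le> n" using n by auto
  define p :: "nat \<times> nat \<Rightarrow> nat \<times> nat" where "p v = (case v of (i, j) \<Rightarrow> (case L ! i of V01 \<Rightarrow> (i, 1 - j) | V02 \<Rightarrow> (i, 2 - j) | V12 \<Rightarrow> (i, 3 - j)
      | R2 \<Rightarrow> (nxt n i, 2) | L2 \<Rightarrow> (prv n i, 2) | _ \<Rightarrow> (i, j)))" for v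
  have mem: "(a, b) \<in> setL L \<longleftrightarrow> a < n \<and> b \<in> colset (L ! a)" for a b
    unfolding setL_def len by auto
  have a3: "cycle_adj 3 0 1" "cycle_adj 3 1 0" "cycle_adj 3 0 2" "cycle_adj 3 2 0" "cycle_adj 3 1 2" "cycle_adj 3 2 1"
    unfolding cycle_adj_def by auto
  have "\<forall>x\<in>setL L. p x \<in> setL L \<and> p x \<noteq> x \<and> CnC3_adj n x (p x) \<and> p (p x) = x"
  proof
    fix x assume x: "x \<in> setL L"
    then obtain i j where ij: "x = (i, j)" "i < n" "j \<in> colset (L ! i)" using mem by (cases x) auto
    have q: "Qp (L ! prv n i) (L ! i) (L ! nxt n i)" using v ij len unfolding valid_def by auto
    show "p x \<in> setL L \<and> p x \<noteq> x \<and> CnC3_adj n x (p x) \<and> p (p x) = x"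
    proof (cases "L ! i")
      case E then show ?thesis using ij by simp
    next
      case V01
      then have "j = 0 \<or> j = 1" using ij by auto
      then show ?thesis using V01 ij a3 by (elim disjE) (simp_all add: p_def mem cart_adj_def)
    next
      case V02
      then have "j = 0 \<or> j = 2" using ij by auto
      then show ?thesis using V02 ij a3 by (elim disjE) (simp_all add: p_def mem cart_adj_def)
    next
      case V12
      then have "j = 1 \<or> j = 2" using ij by auto
      then show ?thesis using V12 ij a3 by (elim disjE) (simp_all add: p_def mem cart_adj_def)
    next
      case R2
      then have j: "j = 2" and nx: "L ! nxt n i = L2" using ij q unfolding Qp_def by auto
      have px: "p x = (nxt n i, 2)" using R2 ij j by (simp add: p_def)
      have ppx: "p (p x) = x" using px nx ij j prv_nxt[OF ij(2)] by (simp add: p_def)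
      have ad: "CnC3_adj n x (p x)" using px ij j cyc_iff[OF ij(2) nxt_lt[OF n0, of i]] unfolding cart_adj_def by auto
      show ?thesis using px ppx ad nx nxt_lt[OF n0] nxt_ne[OF n2 ij(2)] ij by (simp add: mem)
    next
      case L2
      then have j: "j = 2" and nx: "L ! prv n i = R2" using ij q unfolding Qp_def by auto
      have px: "p x = (prv n i, 2)" using L2 ij j by (simp add: p_def)
      have ppx: "p (p x) = x" using px nx ij j nxt_prv[OF ij(2)] by (simp add: p_def)
      have ad: "CnC3_adj n x (p x)" using px ij j cyc_iff[OF ij(2) prv_lt[OF n0, of i]] unfolding cart_adj_def by auto
      show ?thesis using px ppx ad nx prv_lt[OF n0] prv_ne[OF n2 ij(2)] ij by (simp add: mem)
    next
      case S2 then show ?thesis using q unfolding Qp_def by simp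
    next
      case T then show ?thesis using q unfolding Qp_def by simp
    qed
  qed
  then have "perfect_matching_induced (CnC3_adj n) (setL L) ((\<lambda>v. {v, p v}) ` setL L)"
    by (rule pm_partner)
  moreover note tdd = td[unfolded total_dominating_def]
  ultimately show ?thesis unfolding paired_dominating_def using tdd by blast
qed

lemma pm_even:
  assumes fin: "finite D" and pm: "perfect_matching_induced G D M"
  shows "even (card D)"
proof -
  note pmd = pm[unfolded perfect_matching_induced_def]
  note edges = pmd[THEN conjunct1]
  note dis = pmd[THEN conjunct2, THEN conjunct1]
  note cov = pmd[THEN conjunct2, THEN conjunct2]
  have sub: "\<forall>e\<in>M. e \<subseteq> D" using edges by fastforce
  have two: "\<forall>e\<in>M. card e = 2" using edges by fastforce
  have DU: "D = \<Union>M"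
  proof
    show "D \<subseteq> \<Union>M" using cov by blast
    show "\<Union>M \<subseteq> D" using sub by blast
  qed
  have finM: "finite M" using sub fin by (meson Pow_iff finite_Pow_iff finite_subset subsetI)
  have disj: "pairwise disjnt M" unfolding pairwise_def disjnt_def using dis by blast
  have finE: "\<And>e. e \<in> M \<Longrightarrow> finite e" using sub fin finite_subset by blast
  have "card D = sum card M" unfolding DU by (rule card_Union_disjoint[OF disj finE])
  also have "\<dots> = sum (\<lambda>_. 2) M" using two by (intro sum.cong) auto
  also have "\<dots> = 2 * card M" by simp
  finally show ?thesis by simp
qed

lemma paired_total:
  assumes "paired_dominating (CnC3_vertices n) (CnC3_adj n) D"
  shows "total_dominating (CnC3_vertices n) (CnC3_adj n) D"
proof -
  note pd = assms[unfolded paired_dominating_def]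
  note DV = pd[THEN conjunct1]
  note dom = pd[THEN conjunct2, THEN conjunct1]
  obtain M where pm: "perfect_matching_induced (CnC3_adj n) D M" using pd[THEN conjunct2, THEN conjunct2] by blast
  note pmd = pm[unfolded perfect_matching_induced_def]
  note edges = pmd[THEN conjunct1]
  note cov = pmd[THEN conjunct2, THEN conjunct2]
  have "\<exists>u\<in>D. CnC3_adj n v u" if v: "v \<in> CnC3_vertices n" for v
  proof (cases "v \<in> D")
    case True
    then obtain e where e: "e \<in> M" "v \<in> e" using cov by blast
    then obtain a b where "e = {a, b}" "a \<in> D" "b \<in> D" "CnC3_adj n a b"
      using edges by blast
    then show ?thesis using adj_sym e(2) by blast
  next
    case False then show ?thesis using dom v by blast
  qed
  then show ?thesis using DV unfolding total_dominating_def by blast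
qed



lemma ceil_eq: "nat \<lceil>4 * real n / 5\<rceil> = (4 * n + 4) div 5"
proof -
  define q where "q = (4 * n + 4) div 5"
  have a: "4 * n \<le> 5 * q" "5 * q \<le> 4 * n + 4" unfolding q_def by linarith+
  have "\<lceil>4 * real n / 5\<rceil> = int q"
  proof (rule ceiling_unique)
    have "real (5 * q) \<le> real (4 * n + 4)" using a(2) by linarith
    then show "of_int (int q) - 1 < 4 * real n / 5" by simp
    have "real (4 * n) \<le> real (5 * q)" using a(1) by linarith
    then show "4 * real n / 5 \<le> of_int (int q)" by simp
  qed
  then show ?thesis unfolding q_def by simp
qed

lemma finV: "finite (CnC3_vertices n)" by simp
lemma td_sub: "total_dominating V G D \<Longrightarrow> D \<subseteq> V" by (simp add: total_dominating_def)
lemma pd_sub: "paired_dominating V G D \<Longrightarrow> D \<subseteq> V" by (simp add: paired_dominating_def)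

theorem theorem3p1:
  fixes n :: nat
  assumes "n \<ge> 3"
  shows "(total_domination_number (CnC3_vertices n) (CnC3_adj n) = nat \<lceil>4 * real n / 5\<rceil>) \<and>
         (paired_domination_number (CnC3_vertices n) (CnC3_adj n) =
           (if n mod 5 \<in> {0, 2, 4} then nat \<lceil>4 * real n / 5\<rceil>
            else nat \<lceil>4 * real n / 5\<rceil> + 1))"
proof -
  have n: "n \<ge> 3" by (rule assms)
  define c where "c = (4 * n + 4) div 5"
  have low: "c \<le> card D" if "total_dominating (CnC3_vertices n) (CnC3_adj n) D" for D
  proof -
    have "4 * n \<le> 5 * card D" by (rule lower[OF n that])
    then show ?thesis unfolding c_def by linarith
  qed
  have finTD: "finite {D. total_dominating (CnC3_vertices n) (CnC3_adj n) D}"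
    by (rule finite_subset[of _ "Pow (CnC3_vertices n)"]) (use td_sub in blast, simp)
  have finPD: "finite {D. paired_dominating (CnC3_vertices n) (CnC3_adj n) D}"
    by (rule finite_subset[of _ "Pow (CnC3_vertices n)"]) (use pd_sub in blast, simp)
  have T: "total_domination_number (CnC3_vertices n) (CnC3_adj n) = c"
    unfolding total_domination_number_def
  proof (rule Min_eqI)
    show "finite (card ` {D. total_dominating (CnC3_vertices n) (CnC3_adj n) D})" using finTD by simp
    show "y \<ge> c" if "y \<in> card ` {D. total_dominating (CnC3_vertices n) (CnC3_adj n) D}" for y
      using that low by blast
    obtain L where L: "length L = n" "valid Qt L" "cnt L = c" using ex_tot_all[OF n] unfolding c_def by blast
    have "total_dominating (CnC3_vertices n) (CnC3_adj n) (setL L)" by (rule tot_from_list[OF n L(1,2)])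
    moreover have "card (setL L) = c" using L(3) card_setL by simp
    ultimately show "c \<in> card ` {D. total_dominating (CnC3_vertices n) (CnC3_adj n) D}"
      by (intro image_eqI[of _ _ "setL L"]) simp_all
  qed
  have P: "paired_domination_number (CnC3_vertices n) (CnC3_adj n) = tp n"
    unfolding paired_domination_number_def
  proof (rule Min_eqI)
    show "finite (card ` {D. paired_dominating (CnC3_vertices n) (CnC3_adj n) D})" using finPD by simp
    show "y \<ge> tp n" if "y \<in> card ` {D. paired_dominating (CnC3_vertices n) (CnC3_adj n) D}" for y
    proof -
      from that obtain D where D: "paired_dominating (CnC3_vertices n) (CnC3_adj n) D" "y = card D" by auto
      have cD: "c \<le> card D" using low[OF paired_total[OF D(1)]] .
      note pd = D(1)[unfolded paired_dominating_def]
      obtain M where pm: "perfect_matching_induced (CnC3_adj n) D M" using pd[THEN conjunct2, THEN conjunct2] by blast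
      have finD: "finite D" using pd[THEN conjunct1] finite_subset finV by blast
      have ev: "even (card D)" by (rule pm_even[OF finD pm])
      show ?thesis
      proof (cases "n mod 5 \<in> {0, 2, 4}")
        case True then show ?thesis using cD D(2) unfolding tp_def c_def by simp
      next
        case False
        then have "n mod 5 = 1 \<or> n mod 5 = 3" by auto
        then have "odd c" unfolding c_def by presburger
        have "card D \<noteq> c" using ev \<open>odd c\<close> by auto
        with cD have "c + 1 \<le> card D" by simp
        then show ?thesis using False D(2) unfolding tp_def c_def by simp
      qed
    qed
    obtain L where L: "length L = n" "valid Qp L" "cnt L = tp n" using ex_pair_all[OF n] by blast
    have "paired_dominating (CnC3_vertices n) (CnC3_adj n) (setL L)" by (rule pair_from_list[OF n L(1,2)])
    moreover have "card (setL L) = tp n" using L(3) card_setL by simp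
    ultimately show "tp n \<in> card ` {D. paired_dominating (CnC3_vertices n) (CnC3_adj n) D}"
      by (intro image_eqI[of _ _ "setL L"]) simp_all
  qed
  show ?thesis unfolding T P ceil_eq c_def tp_def by simp
qed

end
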